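(* Let $\mathcal{P}$ be a parametrised propositional logic program over a finite alphabet $\Sigma=\Sigma_p\cup\Sigma_d$ that is positive (no negation occurs in rule bodies). Then the parametrised immediate consequence operator $\mathcal{T}_{\mathcal{P}}:L^d_p\to L^d_p$ is monotone, and for every $\Sigma$-interpretation $J$: $J\models_{wf}\mathcal{P}$ if and only if $J\models\mathrm{Th}(\mathrm{lfp}(\mathcal{T}_{\mathcal{P}}))$.
   Context: A parametrised logic program $\mathcal{P}$ is a finite set of rules $h\leftarrow l_1\wedge\dots\wedge l_n$ where $h\in\Sigma_d$ and each $l_i$ is an atom of $\Sigma$ or its negation; $\Sigma_p$ are parameter symbols, $\Sigma_d$ defined symbols. For $q\in\Sigma_d$, $\varphi_q$ is the disjunction of the bodies of all rules with head $q$ (empty disjunction $=$ false, empty body $=$ true). $L_p$: equivalence classes $\overline\varphi$ of propositional formulas over $\Sigma_p$ ordered by entailment; $L^d_p$: maps $\Sigma_d\to L_p$ ordered pointwise (symbolic interpretations). Evaluation of a formula $\varphi$ over $\Sigma$ in $\mathcal{A}\in L^d_p$: replace each $q\in\Sigma_d$ by a representative of $\mathcal{A}(q)$ and keep atoms of $\Sigma_p$, taking the equivalence class; $\mathcal{T}_{\mathcal{P}}(\mathcal{A})(q)=\varphi_q^{\mathcal{A}}$. $\mathrm{Th}(\mathcal{A})$ is the propositional theory $\bigwedge_{q\in\Sigma_d}(q\leftrightarrow\psi_q)$ with $\psi_q$ a representative of $\mathcal{A}(q)$ (unique up to equivalence). Parametrised well-founded semantics: for $I\in 2^{\Sigma_p}$,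 $T^I_{\mathcal{P}}:2^{\Sigma_d}\to 2^{\Sigma_d}$ maps $J'$ to $\{q\mid \varphi_q\text{ true in }I\cup J'\}$, and $\Psi^I_{\mathcal{P}}$ on pairs $(J_1,J_2)$ of $\Sigma_d$-interpretations is Fitting's operator: $\Psi^I_{\mathcal{P}}(J_1,J_2)_1=\{q\mid\exists$ rule with head $q$ whose body is true under Kleene three-valued evaluation in $(J_1,J_2)$ with $\Sigma_p$ fixed to $I\}$, $\Psi^I_{\mathcal{P}}(J_1,J_2)_2=\{q\mid\exists$ rule with head $q$ whose body is not false there$\}$. A partial $\Psi$-stable fixpoint is $(x,y)$ with $x=\mathrm{lfp}(\Psi(\cdot,y)_1)$, $y=\mathrm{lfp}(\Psi(x,\cdot)_2)$, and the $\Psi$-well-founded fixpoint is the least precise such pair (precision: $(x,y)\leq_p(u,v)$ iff $x\subseteq u$, $v\subseteq y$). $J\models_{wf}\mathcal{P}$ iff $(J\cap\Sigma_d,J\cap\Sigma_d)$ is the $\Psi^{J\cap\Sigma_p}_{\mathcal{P}}$-well-founded fixpoint of $T^{J\cap\Sigma_p}_{\mathcal{P}}$. $\models$ is classical propositional satisfaction. *)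

theory Defs
  imports Main
begin

datatype 'a form =
    Atom 'a
  | FTrue
  | FFalse
  | FNot "'a form"
  | FAnd "'a form" "'a form"
  | FOr "'a form" "'a form"
  | FIff "'a form" "'a form"

fun sat :: "'a set \<Rightarrow> 'a form \<Rightarrow> bool" where
  "sat I (Atom a) = (a \<in> I)"
| "sat I FTrue = True"
| "sat I FFalse = False"
| "sat I (FNot \<phi>) = (\<not> sat I \<phi>)"
| "sat I (FAnd \<phi> \<psi>) = (sat I \<phi> \<and> sat I \<psi>)"
| "sat I (FOr \<phi> \<psi>) = (sat I \<phi> \<or> sat I \<psi>)"
| "sat I (FIff \<phi> \<psi>) = (sat I \<phi> \<longleftrightarrow> sat I \<psi>)"

fun subst :: "('a \<Rightarrow> 'b form) \<Rightarrow> 'a form \<Rightarrow> 'b form" where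
  "subst s (Atom a) = s a"
| "subst s FTrue = FTrue"
| "subst s FFalse = FFalse"
| "subst s (FNot \<phi>) = FNot (subst s \<phi>)"
| "subst s (FAnd \<phi> \<psi>) = FAnd (subst s \<phi>) (subst s \<psi>)"
| "subst s (FOr \<phi> \<psi>) = FOr (subst s \<phi>) (subst s \<psi>)"
| "subst s (FIff \<phi> \<psi>) = FIff (subst s \<phi>) (subst s \<psi>)"

text \<open>Alphabet: parameter symbols of type 'p (Sigma_p), defined symbols of type 'd
  (Sigma_d); atoms of Sigma are of type 'p + 'd (Inl = parameter, Inr = defined).\<close>

datatype 'a lit = PosL 'a | NegL 'a

type_synonym ('p, 'd) rule = "'d \<times> ('p + 'd) lit list"
type_synonym ('p, 'd) program = "('p, 'd) rule list"

definition positive :: "('p, 'd) program \<Rightarrow> bool" where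
  "positive P \<longleftrightarrow> (\<forall>r \<in> set P. \<forall>l \<in> set (snd r). \<exists>a. l = PosL a)"

fun lit_form :: "'a lit \<Rightarrow> 'a form" where
  "lit_form (PosL a) = Atom a"
| "lit_form (NegL a) = FNot (Atom a)"

definition body_form :: "('p + 'd) lit list \<Rightarrow> ('p + 'd) form" where
  "body_form ls = foldr (\<lambda>l \<phi>. FAnd (lit_form l) \<phi>) ls FTrue"

definition phi :: "('p, 'd) program \<Rightarrow> 'd \<Rightarrow> ('p + 'd) form" where
  "phi P q = foldr (\<lambda>r \<phi>. FOr (body_form (snd r)) \<phi>) (filter (\<lambda>r. fst r = q) P) FFalse"

quotient_type 'p lp = "'p form" / "\<lambda>\<phi> \<psi>. \<forall>I. sat I \<phi> = sat I \<psi>"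
  by (intro equivpI reflpI sympI transpI) auto

instantiation lp :: (type) order
begin

lift_definition less_eq_lp :: "'p lp \<Rightarrow> 'p lp \<Rightarrow> bool"
  is "\<lambda>\<phi> \<psi>. \<forall>I. sat I \<phi> \<longrightarrow> sat I \<psi>" by auto

definition less_lp :: "'p lp \<Rightarrow> 'p lp \<Rightarrow> bool" where
  "less_lp x y \<longleftrightarrow> x \<le> y \<and> \<not> y \<le> x"

instance
proof
  fix x y z :: "'p lp"
  show "(x < y) = (x \<le> y \<and> \<not> y \<le> x)" by (simp add: less_lp_def)
  show "x \<le> x" by transfer auto
  show "x \<le> y \<Longrightarrow> y \<le> z \<Longrightarrow> x \<le> z" by transfer auto
  show "x \<le> y \<Longrightarrow> y \<le> x \<Longrightarrow> x = y" by transfer auto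
qed

end

definition eval_sym :: "('p + 'd) form \<Rightarrow> ('d \<Rightarrow> 'p lp) \<Rightarrow> 'p lp" where
  "eval_sym \<phi> A = abs_lp (subst (\<lambda>a. case a of Inl p \<Rightarrow> Atom p | Inr q \<Rightarrow> rep_lp (A q)) \<phi>)"

definition TP :: "('p, 'd) program \<Rightarrow> ('d \<Rightarrow> 'p lp) \<Rightarrow> ('d \<Rightarrow> 'p lp)" where
  "TP P A = (\<lambda>q. eval_sym (phi P q) A)"

definition least_fixpoint :: "('a::order \<Rightarrow> 'a) \<Rightarrow> 'a" where
  "least_fixpoint f = (THE x. f x = x \<and> (\<forall>y. f y = y \<longrightarrow> x \<le> y))"

definition Th :: "('d \<Rightarrow> 'p lp) \<Rightarrow> ('p + 'd) form set" where
  "Th A = {FIff (Atom (Inr q)) (map_form Inl (rep_lp (A q))) | q. True}"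

definition models :: "'a set \<Rightarrow> 'a form set \<Rightarrow> bool" where
  "models J \<Gamma> \<longleftrightarrow> (\<forall>\<phi> \<in> \<Gamma>. sat J \<phi>)"

text \<open>Fitting's operator Psi^I on pairs (J1, J2): truth of literals under the
  three-valued (Kleene) evaluation in (J1,J2) with parameters fixed to I.\<close>
fun lit_true :: "'p set \<Rightarrow> 'd set \<Rightarrow> 'd set \<Rightarrow> ('p + 'd) lit \<Rightarrow> bool" where
  "lit_true I J1 J2 (PosL (Inl p)) = (p \<in> I)"
| "lit_true I J1 J2 (PosL (Inr q)) = (q \<in> J1)"
| "lit_true I J1 J2 (NegL (Inl p)) = (p \<notin> I)"
| "lit_true I J1 J2 (NegL (Inr q)) = (q \<notin> J2)"

fun lit_not_false :: "'p set \<Rightarrow> 'd set \<Rightarrow> 'd set \<Rightarrow> ('p + 'd) lit \<Rightarrow> bool" where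
  "lit_not_false I J1 J2 (PosL (Inl p)) = (p \<in> I)"
| "lit_not_false I J1 J2 (PosL (Inr q)) = (q \<in> J2)"
| "lit_not_false I J1 J2 (NegL (Inl p)) = (p \<notin> I)"
| "lit_not_false I J1 J2 (NegL (Inr q)) = (q \<notin> J1)"

definition Psi1 :: "('p, 'd) program \<Rightarrow> 'p set \<Rightarrow> 'd set \<Rightarrow> 'd set \<Rightarrow> 'd set" where
  "Psi1 P I J1 J2 = {q. \<exists>r \<in> set P. fst r = q \<and> (\<forall>l \<in> set (snd r). lit_true I J1 J2 l)}"

definition Psi2 :: "('p, 'd) program \<Rightarrow> 'p set \<Rightarrow> 'd set \<Rightarrow> 'd set \<Rightarrow> 'd set" where
  "Psi2 P I J1 J2 = {q. \<exists>r \<in> set P. fst r = q \<and> (\<forall>l \<in> set (snd r). lit_not_false I J1 J2 l)}"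

definition partial_stable :: "('p, 'd) program \<Rightarrow> 'p set \<Rightarrow> 'd set \<Rightarrow> 'd set \<Rightarrow> bool" where
  "partial_stable P I x y \<longleftrightarrow>
     x = lfp (\<lambda>x'. Psi1 P I x' y) \<and> y = lfp (\<lambda>y'. Psi2 P I x y')"

text \<open>The Psi-well-founded fixpoint: the least precise partial stable fixpoint
  (precision: (x,y) <=_p (u,v) iff x \<subseteq> u and v \<subseteq> y).\<close>
definition wf_fixpoint :: "('p, 'd) program \<Rightarrow> 'p set \<Rightarrow> 'd set \<Rightarrow> 'd set \<Rightarrow> bool" where
  "wf_fixpoint P I x y \<longleftrightarrow> partial_stable P I x y \<and>
     (\<forall>u v. partial_stable P I u v \<longrightarrow> x \<subseteq> u \<and> v \<subseteq> y)"

definition wf_model :: "('p, 'd) program \<Rightarrow> ('p + 'd) set \<Rightarrow> bool" where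
  "wf_model P J \<longleftrightarrow> wf_fixpoint P {p. Inl p \<in> J} {q. Inr q \<in> J} {q. Inr q \<in> J}"

end

theory Submission
  imports Defs
begin

lemma rep_abs_sat: "sat I (rep_lp (abs_lp x)) = sat I x"
  using Quotient3_rep_abs[OF Quotient3_lp, of x] by auto

lemma lp_le_iff: "(x::'p lp) \<le> y \<longleftrightarrow> (\<forall>I. sat I (rep_lp x) \<longrightarrow> sat I (rep_lp y))"
  by (simp add: less_eq_lp_def)

lemma lp_eq_iff: "(x::'p lp) = y \<longleftrightarrow> (\<forall>I. sat I (rep_lp x) = sat I (rep_lp y))"
  by (metis antisym lp_le_iff order_refl)

lemma sat_subst: "sat I (subst s \<phi>) = sat {a. sat I (s a)} \<phi>"
  by (induction \<phi>) auto

lemma sat_map_form: "sat J (map_form f \<phi>) = sat {a. f a \<in> J} \<phi>"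
  by (induction \<phi>) auto

lemma sat_lit: "sat K (lit_form l) = lit_true {p. Inl p \<in> K} {q. Inr q \<in> K} {q. Inr q \<in> K} l"
  by (cases l rule: lit_form.cases; rename_tac a; case_tac a) auto

lemma sat_body: "sat K (body_form ls) = (\<forall>l\<in>set ls. sat K (lit_form l))"
  unfolding body_form_def by (induction ls) auto

lemma sat_phi_aux: "sat K (foldr (\<lambda>r \<phi>. FOr (body_form (snd r)) \<phi>) rs FFalse)
   = (\<exists>r\<in>set rs. sat K (body_form (snd r)))"
  by (induction rs) auto

lemma sat_phi: "sat K (phi P q) = (q \<in> Psi1 P {p. Inl p \<in> K} {q. Inr q \<in> K} {q. Inr q \<in> K})"
  unfolding phi_def Psi1_def sat_phi_aux sat_body sat_lit by force

definition val :: "('d \<Rightarrow> 'p lp) \<Rightarrow> 'p set \<Rightarrow> 'd set" where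
  "val A I = {q. sat I (rep_lp (A q))}"

definition F :: "('p, 'd) program \<Rightarrow> 'p set \<Rightarrow> 'd set \<Rightarrow> 'd set" where
  "F P I X = Psi1 P I X X"

lemma key: "sat I (rep_lp (TP P A q)) = (q \<in> F P I (val A I))"
proof -
  let ?s = "\<lambda>a. case a of Inl p \<Rightarrow> Atom p | Inr q \<Rightarrow> rep_lp (A q)"
  have "sat I (rep_lp (TP P A q)) = sat {a. sat I (?s a)} (phi P q)"
    unfolding TP_def eval_sym_def rep_abs_sat sat_subst ..
  moreover have "{p. Inl p \<in> {a. sat I (?s a)}} = I" by auto
  moreover have "{q. Inr q \<in> {a. sat I (?s a)}} = val A I" by (auto simp: val_def)
  ultimately show ?thesis unfolding sat_phi F_def by simp
qed

lemma val_TP: "val (TP P A) I = F P I (val A I)"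
  using key[of I P A] by (auto simp: val_def)

lemma F_mono:
  fixes P :: "('p, 'd) program"
  assumes "positive P" shows "mono (F P I)"
proof (rule monoI)
  fix X Y :: "'d set" assume "X \<subseteq> Y"
  show "F P I X \<subseteq> F P I Y"
  proof
    fix q assume "q \<in> F P I X"
    then obtain r where r: "r \<in> set P" "fst r = q" "\<forall>l\<in>set (snd r). lit_true I X X l"
      by (auto simp: F_def Psi1_def)
    have "\<forall>l\<in>set (snd r). lit_true I Y Y l"
    proof
      fix l assume l: "l \<in> set (snd r)"
      then obtain a where a: "l = PosL a" using assms r(1) unfolding positive_def by blast
      show "lit_true I Y Y l" using r(3) l a \<open>X \<subseteq> Y\<close> by (cases a) fastforce+
    qed
    then show "q \<in> F P I Y" using r by (auto simp: F_def Psi1_def)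
  qed
qed

lemma le_fun_val: "(A::'d \<Rightarrow> 'p lp) \<le> B \<longleftrightarrow> (\<forall>I. val A I \<subseteq> val B I)"
  by (auto simp: le_fun_def lp_le_iff val_def)

lemma TP_mono: assumes "positive P" shows "mono (TP P)"
  unfolding mono_def le_fun_val val_TP using F_mono[OF assms] by (auto dest: monoD)

definition bt :: "'d \<Rightarrow> 'p lp" where "bt = (\<lambda>q. abs_lp FFalse)"

lemma val_iter: "val ((TP P ^^ n) bt) I = (F P I ^^ n) {}"
proof (induction n)
  case 0 then show ?case by (simp add: val_def bt_def rep_abs_sat)
next
  case (Suc n) then show ?case by (simp add: val_TP)
qed

lemma iter_stable:
  fixes G :: "'d::finite set \<Rightarrow> 'd set"
  assumes "mono G"
  shows "(G ^^ Suc (card (UNIV::'d set))) {} = (G ^^ card (UNIV::'d set)) {}"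
proof -
  let ?f = "\<lambda>n. (G ^^ n) {}"
  have step: "?f n \<subseteq> ?f (Suc n)" for n
  proof (induction n)
    case 0 then show ?case by simp
  next
    case (Suc n) then show ?case using monoD[OF assms] by auto
  qed
  have mf: "mono ?f" by (rule mono_iff_le_Suc[THEN iffD2]) (use step in auto)
  have "?f (card (UNIV::'d set)) = (\<Union>n. ?f n)"
    by (intro finite_mono_strict_prefix_implies_finite_fixpoint[where S=UNIV] mf)
       (auto intro: finite_mono_remains_stable_implies_strict_prefix[OF _ mf])
  then show ?thesis using step by blast
qed

lemma lfp_F:
  fixes P :: "('p, 'd::finite) program"
  assumes "positive P"
  shows "lfp (F P I) = (F P I ^^ card (UNIV::'d set)) {}"
  using lfp_Kleene_iter[OF F_mono[OF assms] iter_stable[OF F_mono[OF assms]]]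
  by (simp add: bot_set_def)

lemma lfp_TP:
  fixes P :: "('p, 'd::finite) program"
  assumes "positive P"
  shows "least_fixpoint (TP P) = (TP P ^^ card (UNIV::'d set)) bt"
proof -
  let ?A = "(TP P ^^ card (UNIV::'d set)) bt"
  have fx: "TP P ?A = ?A"
  proof -
    have "\<forall>I. val (TP P ?A) I = val ?A I"
      using iter_stable[OF F_mono[OF assms]] by (simp add: val_TP val_iter)
    then show ?thesis by (intro antisym) (auto simp: le_fun_val)
  qed
  have least: "?A \<le> B" if "TP P B = B" for B
  proof -
    have "(TP P ^^ n) bt \<le> B" for n
    proof (induction n)
      case 0 then show ?case by (simp add: le_fun_val val_def bt_def rep_abs_sat)
    next
      case (Suc n)
      then have "TP P ((TP P ^^ n) bt) \<le> TP P B" using TP_mono[OF assms] by (auto dest: monoD)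
      then show ?case using that by simp
    qed
    then show ?thesis .
  qed
  show ?thesis unfolding least_fixpoint_def
    by (rule the_equality) (use fx least in \<open>auto intro: antisym\<close>)
qed

lemma Psi_pos:
  assumes "positive P"
  shows "Psi1 P I x y = F P I x" "Psi2 P I x y = F P I y"
proof -
  have "\<forall>l\<in>set (snd r). lit_true I x y l = lit_true I x x l" if "r \<in> set P" for r
    using assms that unfolding positive_def
    by (metis lit_true.simps(1,2) sum.exhaust)
  then show "Psi1 P I x y = F P I x" unfolding F_def Psi1_def by blast
  have "\<forall>l\<in>set (snd r). lit_not_false I x y l = lit_true I y y l" if "r \<in> set P" for r
    using assms that unfolding positive_def
    by (metis lit_true.simps(1,2) lit_not_false.simps(1,2) sum.exhaust)
  then show "Psi2 P I x y = F P I y" unfolding F_def Psi1_def Psi2_def by blast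
qed

lemma wf_iff:
  assumes "positive P"
  shows "wf_fixpoint P I X X \<longleftrightarrow> X = lfp (F P I)"
  unfolding wf_fixpoint_def partial_stable_def Psi_pos[OF assms] by auto

theorem theorem4p8:
  fixes P :: "('p::finite, 'd::finite) program"
  assumes "positive P"
  shows "mono (TP P) \<and>
         (\<forall>J :: ('p + 'd) set. wf_model P J \<longleftrightarrow> models J (Th (least_fixpoint (TP P))))"
proof (intro conjI allI)
  show "mono (TP P)" by (rule TP_mono[OF assms])
  fix J :: "('p + 'd) set"
  let ?I = "{p. Inl p \<in> J}" and ?X = "{q. Inr q \<in> J}"
  have "models J (Th (least_fixpoint (TP P))) \<longleftrightarrow>
        (\<forall>q. (Inr q \<in> J) = (q \<in> val (least_fixpoint (TP P)) ?I))"
    unfolding models_def Th_def val_def by (auto simp: sat_map_form)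
  also have "\<dots> \<longleftrightarrow> ?X = lfp (F P ?I)"
    unfolding lfp_TP[OF assms] val_iter lfp_F[OF assms] by auto
  finally show "wf_model P J \<longleftrightarrow> models J (Th (least_fixpoint (TP P)))"
    unfolding wf_model_def wf_iff[OF assms] by simp
qed

end
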